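(* Let $G$ be a noncyclic finite $p$-group for some prime $p$. (i) If $N$ and $M$ are normal subgroups of $G$ with $\eta(G) = \eta(G/N) = \eta(G/M)$, then $\eta(G) = \eta(G/NM)$. (ii) There exists a characteristic subgroup $X$ of $G$ such that $\eta(G) = \eta(G/X)$ and such that every normal subgroup $N$ of $G$ with $\eta(G/N) = \eta(G)$ satisfies $N \le X$.
   Context: A cyclic subgroup $C$ of a group $G$ is maximal cyclic if there is no cyclic subgroup $D$ of $G$ with $C < D$. $\eta(G)$ denotes the number of conjugacy classes of maximal cyclic subgroups of $G$. *)

theory Defs
  imports "HOL-Algebra.Algebra"
begin

definition cyclic_subgroups :: "('a, 'b) monoid_scheme \<Rightarrow> 'a set set" where
  "cyclic_subgroups G = {generate G {g} | g. g \<in> carrier G}"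

definition max_cyclic_subgroups :: "('a, 'b) monoid_scheme \<Rightarrow> 'a set set" where
  "max_cyclic_subgroups G =
     {C \<in> cyclic_subgroups G. \<not> (\<exists>D \<in> cyclic_subgroups G. C \<subset> D)}"

definition conj_set :: "('a, 'b) monoid_scheme \<Rightarrow> 'a \<Rightarrow> 'a set \<Rightarrow> 'a set" where
  "conj_set G g H = (\<lambda>h. g \<otimes>\<^bsub>G\<^esub> h \<otimes>\<^bsub>G\<^esub> inv\<^bsub>G\<^esub> g) ` H"

definition max_cyclic_conj_rel :: "('a, 'b) monoid_scheme \<Rightarrow> ('a set \<times> 'a set) set" where
  "max_cyclic_conj_rel G =
     {(C, D). C \<in> max_cyclic_subgroups G \<and> D \<in> max_cyclic_subgroups G \<and>
              (\<exists>g \<in> carrier G. D = conj_set G g C)}"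

definition eta :: "('a, 'b) monoid_scheme \<Rightarrow> nat" where
  "eta G = card (Equiv_Relations.quotient (max_cyclic_subgroups G) (max_cyclic_conj_rel G))"

definition characteristic :: "('a, 'b) monoid_scheme \<Rightarrow> 'a set \<Rightarrow> bool" where
  "characteristic G H \<longleftrightarrow> subgroup H G \<and> (\<forall>f \<in> iso G G. f ` H = H)"

end

theory Submission
  imports Defs
begin



definition ppow :: "('a, 'b) monoid_scheme \<Rightarrow> nat \<Rightarrow> 'a set" where
  "ppow G p = (\<lambda>y. y [^]\<^bsub>G\<^esub> p) ` carrier G"

definition crel :: "('a, 'b) monoid_scheme \<Rightarrow> nat \<Rightarrow> ('a \<times> 'a) set" where
  "crel G p = {(a, b). a \<in> carrier G - ppow G p \<and> b \<in> carrier G - ppow G p \<and>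
     (\<exists>g\<in>carrier G. \<exists>k::nat. b = (g \<otimes>\<^bsub>G\<^esub> a \<otimes>\<^bsub>G\<^esub> inv\<^bsub>G\<^esub> g) [^]\<^bsub>G\<^esub> k)}"

lemma pullback_card:
  assumes fA: "f ` A = S" and eq: "equiv S R"
  shows "card (S // R) = card (A // {(x, y). x \<in> A \<and> y \<in> A \<and> (f x, f y) \<in> R})"
    and "equiv A {(x, y). x \<in> A \<and> y \<in> A \<and> (f x, f y) \<in> R}"
proof -
  define R' where "R' = {(x, y). x \<in> A \<and> y \<in> A \<and> (f x, f y) \<in> R}"
  have Rs: "R \<subseteq> S \<times> S" using eq by (auto simp: equiv_def refl_on_def)
  have eqA: "equiv A R'"
    using eq fA unfolding R'_def equiv_def refl_on_def sym_def trans_def by blast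
  then show "equiv A {(x, y). x \<in> A \<and> y \<in> A \<and> (f x, f y) \<in> R}" unfolding R'_def .
  have img: "f ` (R' `` {a}) = R `` {f a}" if "a \<in> A" for a
  proof
    show "f ` (R' `` {a}) \<subseteq> R `` {f a}" unfolding R'_def by auto
    show "R `` {f a} \<subseteq> f ` (R' `` {a})"
    proof
      fix c assume "c \<in> R `` {f a}"
      then have "c \<in> S" "(f a, c) \<in> R" using Rs by auto
      then obtain b where "b \<in> A" "c = f b" using fA by auto
      then show "c \<in> f ` (R' `` {a})" using \<open>(f a, c) \<in> R\<close> that unfolding R'_def by auto
    qed
  qed
  have "bij_betw (\<lambda>Z. f ` Z) (A // R') (S // R)"
  proof (rule bij_betw_imageI)
    show "inj_on ((`) f) (A // R')"
    proof (rule inj_onI)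
      fix X1 Y1 assume "X1 \<in> A // R'" "Y1 \<in> A // R'" "f ` X1 = f ` Y1"
      then obtain a b where ab: "a \<in> A" "b \<in> A" "X1 = R' `` {a}" "Y1 = R' `` {b}"
        by (auto simp: quotient_def)
      then have "R `` {f a} = R `` {f b}" using img \<open>f ` X1 = f ` Y1\<close> by simp
      then have "(f a, f b) \<in> R" using eq ab fA
        by (metis eq_equiv_class_iff image_eqI)
      then have "(a, b) \<in> R'" using ab unfolding R'_def by auto
      then show "X1 = Y1" using ab eqA by (simp add: equiv_class_eq)
    qed
    show "(`) f ` (A // R') = S // R"
    proof
      show "(`) f ` (A // R') \<subseteq> S // R"
        using img fA by (auto simp: quotient_def)
      show "S // R \<subseteq> (`) f ` (A // R')"
      proof
        fix Z assume "Z \<in> S // R"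
        then obtain s where "s \<in> S" "Z = R `` {s}" by (auto simp: quotient_def)
        then obtain a where "a \<in> A" "s = f a" using fA by auto
        then show "Z \<in> (`) f ` (A // R')" using img \<open>Z = R `` {s}\<close>
          by (auto simp: quotient_def)
      qed
    qed
  qed
  then show "card (S // R) = card (A // {(x, y). x \<in> A \<and> y \<in> A \<and> (f x, f y) \<in> R})"
    unfolding R'_def[symmetric] by (simp add: bij_betw_same_card)
qed

lemma quotient_compare:
  assumes fin: "finite A" and eqR: "equiv A R" and eqR': "equiv A' R'" and sub: "A' \<subseteq> A"
    and sat: "\<And>x y. x \<in> A' \<Longrightarrow> (x, y) \<in> R \<Longrightarrow> y \<in> A'"
    and RR': "\<And>x y. x \<in> A' \<Longrightarrow> (x, y) \<in> R \<Longrightarrow> (x, y) \<in> R'"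
    and cd: "card (A' // R') = card (A // R)"
  shows "A' = A \<and> R' \<subseteq> R"
proof -
  define Q where "Q = {R `` {a} | a. a \<in> A'}"
  have QA: "Q \<subseteq> A // R" unfolding Q_def quotient_def using sub by auto
  have finQ: "finite (A // R)" using fin eqR
    by (meson finite_quotient equiv_def refl_on_def)
  have cls: "R' `` (R `` {a}) = R' `` {a}" if "a \<in> A'" for a
  proof
    show "R' `` {a} \<subseteq> R' `` (R `` {a})"
      using that sub eqR by (auto simp: equiv_def refl_on_def)
    show "R' `` (R `` {a}) \<subseteq> R' `` {a}"
    proof
      fix c assume "c \<in> R' `` (R `` {a})"
      then obtain b where "(a, b) \<in> R" "(b, c) \<in> R'" by auto
      then have "(a, b) \<in> R'" using RR' that by auto
      then show "c \<in> R' `` {a}" using \<open>(b, c) \<in> R'\<close> eqR'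
        by (auto simp: equiv_def trans_def)
    qed
  qed
  have imgQ: "A' // R' = (\<lambda>Z. R' `` Z) ` Q"
    unfolding Q_def quotient_def using cls by auto
  have c1: "card (A' // R') \<le> card Q" unfolding imgQ by (rule card_image_le) (use QA finQ finite_subset in auto)
  have c2: "card Q \<le> card (A // R)" using QA finQ by (simp add: card_mono)
  have QeqA: "Q = A // R" using QA finQ c1 c2 cd
    by (metis card_subset_eq le_antisym)
  have inj: "inj_on (\<lambda>Z. R' `` Z) Q"
    using c1 c2 cd imgQ QeqA finQ
    by (metis eq_card_imp_inj_on le_antisym)
  have "A' = A"
  proof
    show "A \<subseteq> A'"
    proof
      fix a assume "a \<in> A"
      then have "R `` {a} \<in> Q" using QeqA by (auto simp: quotient_def)
      then obtain b where b: "b \<in> A'" "R `` {a} = R `` {b}" unfolding Q_def by auto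
      then have "(b, a) \<in> R" using \<open>a \<in> A\<close> sub eqR
        by (metis eq_equiv_class_iff subsetD)
      then show "a \<in> A'" using sat b by auto
    qed
  qed (rule sub)
  moreover have "R' \<subseteq> R"
  proof
    fix z assume "z \<in> R'"
    then obtain x y where z: "z = (x, y)" "(x, y) \<in> R'" by (cases z) auto
    then have xy: "x \<in> A'" "y \<in> A'" using eqR' by (auto simp: equiv_def refl_on_def)
    have "R' `` {x} = R' `` {y}" using z eqR' by (simp add: equiv_class_eq)
    then have "R' `` (R `` {x}) = R' `` (R `` {y})" using cls xy by simp
    moreover have "R `` {x} \<in> Q" "R `` {y} \<in> Q" using xy unfolding Q_def by auto
    ultimately have "R `` {x} = R `` {y}" using inj by (meson inj_onD)
    then show "z \<in> R" using z xy sub eqR by (metis eq_equiv_class_iff subsetD)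
  qed
  ultimately show ?thesis by simp
qed




context group
begin

lemma inv_cancel_l2: "g \<in> carrier G \<Longrightarrow> x \<in> carrier G \<Longrightarrow> inv g \<otimes> (g \<otimes> x) = x"
  by (simp add: m_assoc[symmetric])

lemma inv_cancel_r2: "g \<in> carrier G \<Longrightarrow> x \<in> carrier G \<Longrightarrow> g \<otimes> (inv g \<otimes> x) = x"
  by (simp add: m_assoc[symmetric])

lemma conj_pow:
  assumes "g \<in> carrier G" "a \<in> carrier G"
  shows "(g \<otimes> a \<otimes> inv g) [^] (k::nat) = g \<otimes> a [^] k \<otimes> inv g"
proof (induction k)
  case 0 then show ?case using assms by simp
next
  case (Suc k)
  then show ?case using assms by (simp add: m_assoc inv_cancel_l2 nat_pow_Suc)
qed

lemma ppow_conj_imp: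
  assumes "g \<in> carrier G" "a \<in> ppow G p"
  shows "g \<otimes> a \<otimes> inv g \<in> ppow G p"
proof -
  obtain y where y: "y \<in> carrier G" "a = y [^] p" using assms unfolding ppow_def by auto
  then have "g \<otimes> a \<otimes> inv g = (g \<otimes> y \<otimes> inv g) [^] p" using assms conj_pow by simp
  then show ?thesis using y assms unfolding ppow_def by auto
qed

lemma ppow_conj:
  assumes "g \<in> carrier G" "a \<in> carrier G"
  shows "g \<otimes> a \<otimes> inv g \<in> ppow G p \<longleftrightarrow> a \<in> ppow G p"
proof
  assume "g \<otimes> a \<otimes> inv g \<in> ppow G p"
  then have "inv g \<otimes> (g \<otimes> a \<otimes> inv g) \<otimes> inv (inv g) \<in> ppow G p"
    using ppow_conj_imp[of "inv g" "g \<otimes> a \<otimes> inv g"] assms by simp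
  moreover have "inv g \<otimes> (g \<otimes> a \<otimes> inv g) \<otimes> inv (inv g) = a"
    using assms by (simp add: m_assoc inv_cancel_l2)
  ultimately show "a \<in> ppow G p" by simp
qed (use ppow_conj_imp assms in auto)

lemma ppow_carrier: "ppow G p \<subseteq> carrier G"
  unfolding ppow_def by auto

lemma one_ppow: "\<one> \<in> ppow G p"
  unfolding ppow_def by (auto intro!: image_eqI[of _ _ \<one>])

lemma ppow_pow_conj:
  assumes "b \<in> ppow G p" "g \<in> carrier G"
  shows "g \<otimes> b [^] (j::nat) \<otimes> inv g \<in> ppow G p"
proof -
  obtain y where y: "y \<in> carrier G" "b = y [^] p" using assms unfolding ppow_def by auto
  then have "b [^] j = (y [^] j) [^] p" by (simp add: nat_pow_pow mult.commute)
  then have "b [^] j \<in> ppow G p" using y unfolding ppow_def by auto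
  then show ?thesis using ppow_conj_imp assms by auto
qed

lemma conj_set_one: "C \<subseteq> carrier G \<Longrightarrow> conj_set G \<one> C = C"
  unfolding conj_set_def by (auto simp: subset_iff)

lemma conj_set_comp:
  assumes "C \<subseteq> carrier G" "g \<in> carrier G" "h \<in> carrier G"
  shows "conj_set G h (conj_set G g C) = conj_set G (h \<otimes> g) C"
  unfolding conj_set_def image_image
proof (rule image_cong[OF refl])
  fix c assume "c \<in> C"
  then have c: "c \<in> carrier G" using assms by auto
  show "h \<otimes> (g \<otimes> c \<otimes> inv g) \<otimes> inv h = h \<otimes> g \<otimes> c \<otimes> inv (h \<otimes> g)"
    using assms c by (simp add: m_assoc inv_mult_group)
qed

lemma conj_set_inv:
  assumes "C \<subseteq> carrier G" "g \<in> carrier G"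
  shows "conj_set G (inv g) (conj_set G g C) = C"
  using assms by (simp add: conj_set_comp conj_set_one)

lemma conj_set_carrier:
  assumes "C \<subseteq> carrier G" "g \<in> carrier G"
  shows "conj_set G g C \<subseteq> carrier G"
  using assms unfolding conj_set_def by auto

lemma conj_set_gen:
  assumes fin: "finite (carrier G)" and "g \<in> carrier G" "a \<in> carrier G"
  shows "conj_set G g (generate G {a}) = generate G {g \<otimes> a \<otimes> inv g}"
proof -
  have ga: "g \<otimes> a \<otimes> inv g \<in> carrier G" using assms by simp
  show ?thesis
    unfolding generate_pow_on_finite_carrier[OF fin assms(3)]
      generate_pow_on_finite_carrier[OF fin ga] conj_set_def
    using assms by (auto simp: conj_pow)
qed

lemma gen_carrier: "a \<in> carrier G \<Longrightarrow> generate G {a} \<subseteq> carrier G"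
  by (simp add: generate_incl)

lemma mccr_equiv: "equiv (max_cyclic_subgroups G) (max_cyclic_conj_rel G)"
proof -
  have sub: "C \<subseteq> carrier G" if "C \<in> max_cyclic_subgroups G" for C
    using that gen_carrier unfolding max_cyclic_subgroups_def cyclic_subgroups_def by auto
  show ?thesis
    unfolding equiv_def refl_on_def sym_def trans_def max_cyclic_conj_rel_def
  proof (intro conjI allI impI ballI)
    fix C assume "C \<in> max_cyclic_subgroups G"
    then show "(C, C) \<in> {(C, D). C \<in> max_cyclic_subgroups G \<and> D \<in> max_cyclic_subgroups G \<and>
              (\<exists>g\<in>carrier G. D = conj_set G g C)}"
      using sub conj_set_one by (auto intro!: bexI[of _ \<one>])
  next
    fix C D assume "(C, D) \<in> {(C, D). C \<in> max_cyclic_subgroups G \<and> D \<in> max_cyclic_subgroups G \<and>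
              (\<exists>g\<in>carrier G. D = conj_set G g C)}"
    then show "(D, C) \<in> {(C, D). C \<in> max_cyclic_subgroups G \<and> D \<in> max_cyclic_subgroups G \<and>
              (\<exists>g\<in>carrier G. D = conj_set G g C)}"
      using sub conj_set_inv by (auto intro!: bexI[of _ "inv _"])
  next
    fix C D E assume "(C, D) \<in> {(C, D). C \<in> max_cyclic_subgroups G \<and> D \<in> max_cyclic_subgroups G \<and>
              (\<exists>g\<in>carrier G. D = conj_set G g C)}"
      "(D, E) \<in> {(C, D). C \<in> max_cyclic_subgroups G \<and> D \<in> max_cyclic_subgroups G \<and>
              (\<exists>g\<in>carrier G. D = conj_set G g C)}"
    then show "(C, E) \<in> {(C, D). C \<in> max_cyclic_subgroups G \<and> D \<in> max_cyclic_subgroups G \<and>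
              (\<exists>g\<in>carrier G. D = conj_set G g C)}"
      using sub conj_set_comp by (auto intro!: bexI[of _ "_ \<otimes> _"])
  qed (auto simp: sub)
qed

end




locale pgrp = group G for G (structure) + fixes p :: nat and n :: nat
  assumes fin: "finite (carrier G)" and pr: "Factorial_Ring.prime p" and ordG: "order G = p ^ n"
    and nontriv: "carrier G \<noteq> {\<one>}"
begin

lemma pow_mod_ord:
  assumes "a \<in> carrier G"
  shows "a [^] (i::nat) = a [^] (i mod ord a)"
proof -
  have "i = ord a * (i div ord a) + i mod ord a" by simp
  then have "a [^] i = a [^] (ord a * (i div ord a)) \<otimes> a [^] (i mod ord a)"
    using assms by (metis nat_pow_mult)
  also have "a [^] (ord a * (i div ord a)) = \<one>"
    using assms by (simp add: nat_pow_pow[symmetric])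
  finally show ?thesis using assms by simp
qed

lemma ord_pp:
  assumes "a \<in> carrier G"
  shows "\<exists>m. ord a = p ^ m"
  using ord_dvd_group_order[OF assms] ordG divides_primepow_nat[OF pr] by auto

lemma gen_nat:
  assumes "a \<in> carrier G"
  shows "generate G {a} = {a [^] k | k. k \<in> (UNIV :: nat set)}"
  using generate_pow_on_finite_carrier[OF fin assms] .

lemma gen_sub:
  assumes "a \<in> carrier G" "b \<in> carrier G" "a \<in> generate G {b}"
  shows "generate G {a} \<subseteq> generate G {b}"
  using generate_subgroup_incl[of "{a}" "generate G {b}"] generate_is_subgroup[of "{b}"] assms
  by auto

lemma gen_self: "a \<in> carrier G \<Longrightarrow> a \<in> generate G {a}"
  by (simp add: generate.incl)

lemma K1:
  assumes a: "a \<in> carrier G" and b: "b \<in> carrier G"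
    and ss: "generate G {a} \<subset> generate G {b}"
  shows "a \<in> ppow G p"
proof -
  have "a \<in> generate G {b}" using ss gen_self a by auto
  then obtain k :: nat where k: "a = b [^] k" using gen_nat b by auto
  show ?thesis
  proof (cases "p dvd k")
    case True
    then obtain j where "k = p * j" by auto
    then have "a = (b [^] j) [^] p" using k b by (simp add: nat_pow_pow mult.commute)
    then show ?thesis using b unfolding ppow_def by auto
  next
    case False
    obtain m where m: "ord b = p ^ m" using ord_pp b by auto
    have "coprime p k" using False pr by (simp add: prime_imp_coprime)
    then have cop: "coprime k (ord b)" using m by (simp add: ac_simps)
    have "k \<noteq> 0" using False by (metis dvd_0_right)
    then obtain x y where xy: "k * x = ord b * y + gcd k (ord b)" using bezout_nat by blast
    then have xy1: "k * x = ord b * y + 1" using cop by simp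
    have "b [^] (k * x) = b [^] ((k * x) mod ord b)" using pow_mod_ord b by blast
    also have "(k * x) mod ord b = 1 mod ord b"
    proof -
      have "k * x = 1 + y * ord b" using xy1 by simp
      then show ?thesis by (simp only: mod_mult_self1)
    qed
    also have "b [^] (1 mod ord b) = b [^] (1::nat)" using pow_mod_ord[OF b, of 1] by simp
    finally have "b = a [^] x" using k b by (simp add: nat_pow_pow)
    then have "b \<in> generate G {a}" using gen_nat a by auto
    then have "generate G {b} \<subseteq> generate G {a}" using gen_sub a b by auto
    then show ?thesis using ss by auto
  qed
qed

lemma gen_one: "generate G {\<one>} = {\<one>}"
  using gen_nat[of \<one>] by auto

lemma exists_nontriv: "\<exists>z\<in>carrier G. z \<noteq> \<one>"
  using nontriv one_closed by blast

lemma one_only: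
  assumes c: "c \<in> carrier G" and ck: "c = c [^] (p * k)"
  shows "c = \<one>"
proof (cases "k = 0")
  case True then show ?thesis using ck[symmetric] by simp
next
  case False
  have pk: "p * k = Suc (p * k - 1)" using False pr prime_gt_0_nat by simp
  have "c [^] (p * k - 1) \<otimes> c = c [^] (Suc (p * k - 1))" by (simp only: nat_pow_Suc)
  also have "\<dots> = c [^] (p * k)" by (simp only: pk[symmetric])
  also have "\<dots> = c" using ck[symmetric] by simp
  finally have e: "c [^] (p * k - 1) \<otimes> c = c" .
  have "c [^] (p * k - 1) = \<one>" using r_cancel_one[of c "c [^] (p * k - 1)"] e c by simp
  then have d: "ord c dvd p * k - 1" using c pow_eq_id by blast
  obtain m where m: "ord c = p ^ m" using ord_pp c by auto
  have "m = 0"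
  proof (rule ccontr)
    assume "m \<noteq> 0"
    then have "p dvd ord c" using m by simp
    then have "p dvd p * k - 1" using d by (rule dvd_trans)
    moreover have "p dvd p * k" by simp
    ultimately have "p dvd p * k - (p * k - 1)" using dvd_diff_nat by blast
    moreover have "p * k - (p * k - 1) = 1"
    proof -
      have "1 \<le> p * k" using prime_gt_0_nat[OF pr] False by simp
      then show ?thesis by (simp only: diff_diff_cancel)
    qed
    ultimately have "p dvd 1" by simp
    then show False using pr by simp
  qed
  then have "ord c = 1" using m by simp
  then show ?thesis using ord_eq_1[OF c] by simp
qed

lemma K2:
  assumes "a \<in> ppow G p"
  shows "\<exists>b\<in>carrier G. generate G {a} \<subset> generate G {b}"
proof -
  obtain c where c1: "c \<in> carrier G" and c2: "a = c [^] p" using assms unfolding ppow_def by auto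
  have a: "a \<in> carrier G" using c1 c2 by simp
  have "a \<in> generate G {c}" using c1 c2 gen_nat by auto
  then have sub: "generate G {a} \<subseteq> generate G {c}" using gen_sub a c1 by auto
  show ?thesis
  proof (cases "generate G {a} = generate G {c}")
    case False then show ?thesis using sub c1 by (intro bexI[of _ c]) auto
  next
    case True
    then have "c \<in> generate G {a}" using gen_self c1 by auto
    then obtain k :: nat where k: "c = a [^] k" using gen_nat a by auto
    have pw: "(c [^] p) [^] k = c [^] (p * k)" using c1 by (simp add: nat_pow_pow)
    have "c = c [^] (p * k)" unfolding pw[symmetric] c2[symmetric] by (rule k)
    then have "c = \<one>" using one_only c1 by blast
    then have a1: "a = \<one>" using c2 by simp
    obtain z where z: "z \<in> carrier G" "z \<noteq> \<one>" using exists_nontriv by auto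
    have "generate G {a} = {\<one>}" using a1 gen_one by simp
    moreover have "{\<one>} \<subset> generate G {z}"
    proof -
      have "z \<in> generate G {z}" "\<one> \<in> generate G {z}"
        using gen_self z generate.one by auto
      then show ?thesis using z(2) by auto
    qed
    ultimately show ?thesis using z(1) by (intro bexI[of _ z]) simp_all
  qed
qed

lemma K3: "ppow G p \<noteq> carrier G"
proof
  assume eq: "ppow G p = carrier G"
  then have "card ((\<lambda>y. y [^] p) ` carrier G) = card (carrier G)" unfolding ppow_def by simp
  then have inj: "inj_on (\<lambda>y. y [^] p) (carrier G)" using fin eq_card_imp_inj_on by blast
  obtain z where z: "z \<in> carrier G" "z \<noteq> \<one>" using exists_nontriv by auto
  obtain m where m: "ord z = p ^ m" using ord_pp z by auto
  have "m \<noteq> 0"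
  proof
    assume "m = 0"
    then have "ord z = 1" using m by simp
    then show False using ord_eq_1[OF z(1)] z(2) by simp
  qed
  define w where "w = z [^] (p ^ (m - 1))"
  have w: "w \<in> carrier G" using z w_def by simp
  have pm: "p ^ (m - 1) * p = p ^ m" using \<open>m \<noteq> 0\<close> by (simp add: power_eq_if)
  have "w [^] p = z [^] (p ^ (m - 1) * p)" unfolding w_def using z by (simp add: nat_pow_pow)
  also have "\<dots> = z [^] ord z" using pm m by simp
  also have "\<dots> = \<one>" using z by simp
  finally have "w [^] p = \<one>" .
  moreover have "w \<noteq> \<one>"
  proof
    assume "w = \<one>"
    then have "p ^ m dvd p ^ (m - 1)" using z m pow_eq_id w_def by metis
    then have "p ^ m \<le> p ^ (m - 1)" using pr by (simp add: dvd_imp_le prime_gt_0_nat)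
    moreover have "p ^ (m - 1) < p ^ m"
      using power_strict_increasing[of "m - 1" m p] \<open>m \<noteq> 0\<close> prime_gt_1_nat[OF pr] by simp
    ultimately show False by simp
  qed
  ultimately show False using inj w one_closed by (metis inj_onD nat_pow_one)
qed

lemma L1: "max_cyclic_subgroups G = (\<lambda>a. generate G {a}) ` (carrier G - ppow G p)"
proof
  show "max_cyclic_subgroups G \<subseteq> (\<lambda>a. generate G {a}) ` (carrier G - ppow G p)"
  proof
    fix C assume C: "C \<in> max_cyclic_subgroups G"
    then obtain g where g: "g \<in> carrier G" "C = generate G {g}"
      unfolding max_cyclic_subgroups_def cyclic_subgroups_def by auto
    have "g \<notin> ppow G p"
    proof
      assume "g \<in> ppow G p"
      then obtain b where "b \<in> carrier G" "generate G {g} \<subset> generate G {b}" using K2 by blast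
      then show False using C g unfolding max_cyclic_subgroups_def cyclic_subgroups_def by blast
    qed
    then show "C \<in> (\<lambda>a. generate G {a}) ` (carrier G - ppow G p)" using g by auto
  qed
  show "(\<lambda>a. generate G {a}) ` (carrier G - ppow G p) \<subseteq> max_cyclic_subgroups G"
  proof
    fix C assume "C \<in> (\<lambda>a. generate G {a}) ` (carrier G - ppow G p)"
    then obtain a where a: "a \<in> carrier G" "a \<notin> ppow G p" "C = generate G {a}" by auto
    have "\<not> (\<exists>D \<in> cyclic_subgroups G. C \<subset> D)"
    proof
      assume "\<exists>D \<in> cyclic_subgroups G. C \<subset> D"
      then obtain b where "b \<in> carrier G" "C \<subset> generate G {b}"
        unfolding cyclic_subgroups_def by auto
      then show False using K1 a by blast
    qed
    then show "C \<in> max_cyclic_subgroups G" using a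
      unfolding max_cyclic_subgroups_def cyclic_subgroups_def by auto
  qed
qed

lemma G2:
  assumes "a \<in> carrier G - ppow G p" "b \<in> carrier G - ppow G p" "a \<in> generate G {b}"
  shows "generate G {a} = generate G {b}"
  using gen_sub[of a b] K1[of a b] assms by blast

lemma gen_eq_iff:
  assumes x: "x \<in> carrier G - ppow G p" and y: "y \<in> carrier G - ppow G p" and g: "g \<in> carrier G"
  shows "generate G {y} = generate G {g \<otimes> x \<otimes> inv g} \<longleftrightarrow> (\<exists>k::nat. y = (g \<otimes> x \<otimes> inv g) [^] k)"
proof
  have gx: "g \<otimes> x \<otimes> inv g \<in> carrier G" using x g by simp
  {
    assume "generate G {y} = generate G {g \<otimes> x \<otimes> inv g}"
    then have "y \<in> generate G {g \<otimes> x \<otimes> inv g}" using gen_self y by blast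
    then show "\<exists>k::nat. y = (g \<otimes> x \<otimes> inv g) [^] k" using gen_nat[OF gx] by auto
  }
  assume "\<exists>k::nat. y = (g \<otimes> x \<otimes> inv g) [^] k"
  then have "y \<in> generate G {g \<otimes> x \<otimes> inv g}" using gen_nat[OF gx] by auto
  moreover have "g \<otimes> x \<otimes> inv g \<in> carrier G - ppow G p" using gx x g ppow_conj by auto
  ultimately show "generate G {y} = generate G {g \<otimes> x \<otimes> inv g}" using G2 y by blast
qed

lemma GEN:
  shows "eta G = card ((carrier G - ppow G p) // crel G p)"
    and "equiv (carrier G - ppow G p) (crel G p)"
proof -
  have pb: "{(x, y). x \<in> carrier G - ppow G p \<and> y \<in> carrier G - ppow G p \<and>
      (generate G {x}, generate G {y}) \<in> max_cyclic_conj_rel G} = crel G p"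
  proof -
    have "(generate G {x}, generate G {y}) \<in> max_cyclic_conj_rel G \<longleftrightarrow>
       (\<exists>g\<in>carrier G. \<exists>k::nat. y = (g \<otimes> x \<otimes> inv g) [^] k)"
      if x: "x \<in> carrier G - ppow G p" and y: "y \<in> carrier G - ppow G p" for x y
    proof -
      have "generate G {x} \<in> max_cyclic_subgroups G" "generate G {y} \<in> max_cyclic_subgroups G"
        using L1 x y by auto
      then have "(generate G {x}, generate G {y}) \<in> max_cyclic_conj_rel G \<longleftrightarrow>
          (\<exists>g\<in>carrier G. generate G {y} = generate G {g \<otimes> x \<otimes> inv g})"
        unfolding max_cyclic_conj_rel_def using conj_set_gen[OF fin] x by auto
      also have "\<dots> \<longleftrightarrow> (\<exists>g\<in>carrier G. \<exists>k::nat. y = (g \<otimes> x \<otimes> inv g) [^] k)"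
        using gen_eq_iff x y by blast
      finally show ?thesis .
    qed
    then show ?thesis unfolding crel_def by auto
  qed
  show "eta G = card ((carrier G - ppow G p) // crel G p)"
    unfolding eta_def using pullback_card(1)[OF L1[symmetric] mccr_equiv] pb by simp
  show "equiv (carrier G - ppow G p) (crel G p)"
    using pullback_card(2)[OF L1[symmetric] mccr_equiv] pb by simp
qed

end




definition relN :: "('a, 'b) monoid_scheme \<Rightarrow> nat \<Rightarrow> 'a set \<Rightarrow> ('a \<times> 'a) set" where
  "relN G p N = {(x, y). x \<in> carrier G - (N <#>\<^bsub>G\<^esub> ppow G p) \<and> y \<in> carrier G - (N <#>\<^bsub>G\<^esub> ppow G p) \<and>
     (\<exists>g\<in>carrier G. \<exists>k::nat. \<exists>m\<in>N. y = m \<otimes>\<^bsub>G\<^esub> (g \<otimes>\<^bsub>G\<^esub> x \<otimes>\<^bsub>G\<^esub> inv\<^bsub>G\<^esub> g) [^]\<^bsub>G\<^esub> k)}"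

context pgrp
begin

lemma quot_pgrp:
  assumes N: "N \<lhd> G" and Nc: "N \<noteq> carrier G"
  shows "\<exists>j. pgrp (G Mod N) p j"
proof -
  interpret N: normal N G by (rule N)
  have grp: "group (G Mod N)" by (rule N.factorgroup_is_group)
  have finQ: "finite (carrier (G Mod N))"
    unfolding carrier_FactGroup using fin by simp
  have "card (rcosets N) * card N = order G" using lagrange N.subgroup_axioms by blast
  then have "card (rcosets N) dvd p ^ n" using ordG by (metis dvd_triv_left)
  then obtain j where j: "card (rcosets N) = p ^ j" using divides_primepow_nat[OF pr] by auto
  have ordQ: "order (G Mod N) = p ^ j" using j by (simp add: order_def FactGroup_def)
  have sub: "N \<subseteq> carrier G" using N.subset .
  obtain x where x: "x \<in> carrier G" "x \<notin> N" using Nc sub by blast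
  have "N #> x \<in> carrier (G Mod N)" using x unfolding carrier_FactGroup by simp
  moreover have "N #> x \<noteq> N" using rcos_self[OF x(1) N.subgroup_axioms] x(2) by auto
  ultimately have "carrier (G Mod N) \<noteq> {\<one>\<^bsub>G Mod N\<^esub>}" by auto
  then have "pgrp (G Mod N) p j"
    using grp finQ ordQ pr unfolding pgrp_def pgrp_axioms_def by blast
  then show ?thesis by blast
qed

lemma coset_eq:
  assumes N: "N \<lhd> G" and y: "y \<in> carrier G" and z: "z \<in> carrier G"
  shows "N #> y = N #> z \<longleftrightarrow> (\<exists>m\<in>N. y = m \<otimes> z)"
proof -
  interpret N: normal N G by (rule N)
  show ?thesis
  proof
    assume "N #> y = N #> z"
    then have "y \<in> N #> z" using repr_independenceD[OF N.subgroup_axioms y] by simp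
    then show "\<exists>m\<in>N. y = m \<otimes> z" unfolding r_coset_def by auto
  next
    assume "\<exists>m\<in>N. y = m \<otimes> z"
    then have "y \<in> N #> z" unfolding r_coset_def by auto
    then show "N #> y = N #> z" using repr_independence[OF _ z N.subgroup_axioms] by simp
  qed
qed

lemma S0:
  assumes N: "N \<lhd> G" and x: "x \<in> carrier G"
  shows "N #> x \<in> ppow (G Mod N) p \<longleftrightarrow> x \<in> N <#> ppow G p"
proof -
  interpret N: normal N G by (rule N)
  have pp: "ppow (G Mod N) p = (\<lambda>y. N #> (y [^] p)) ` carrier G"
    unfolding ppow_def carrier_FactGroup image_image using N.FactGroup_pow by simp
  show ?thesis
  proof
    assume "N #> x \<in> ppow (G Mod N) p"
    then obtain y where y: "y \<in> carrier G" "N #> x = N #> (y [^] p)" unfolding pp by auto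
    then obtain m where "m \<in> N" "x = m \<otimes> y [^] p" using coset_eq[OF N x, of "y [^] p"] by auto
    then show "x \<in> N <#> ppow G p" using y unfolding set_mult_def ppow_def by auto
  next
    assume "x \<in> N <#> ppow G p"
    then obtain m y where my: "m \<in> N" "y \<in> carrier G" "x = m \<otimes> y [^] p"
      unfolding set_mult_def ppow_def by auto
    then have "N #> x = N #> (y [^] p)" using coset_eq[OF N x, of "y [^] p"] by auto
    then show "N #> x \<in> ppow (G Mod N) p" unfolding pp using my by auto
  qed
qed

lemma ppow_sub_NP:
  assumes N: "N \<lhd> G"
  shows "ppow G p \<subseteq> N <#> ppow G p"
proof
  fix q assume "q \<in> ppow G p"
  moreover have "\<one> \<in> N" using N normal_imp_subgroup subgroup.one_closed by blast
  moreover have "q \<in> carrier G" using \<open>q \<in> ppow G p\<close> ppow_carrier by blast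
  then have "q = \<one> \<otimes> q" by simp
  ultimately show "q \<in> N <#> ppow G p" unfolding set_mult_def by blast
qed

lemma S2:
  assumes N: "N \<lhd> G" and Nc: "N \<noteq> carrier G"
  shows "eta (G Mod N) = card ((carrier G - (N <#> ppow G p)) // relN G p N)"
    and "equiv (carrier G - (N <#> ppow G p)) (relN G p N)"
proof -
  interpret N: normal N G by (rule N)
  obtain j where "pgrp (G Mod N) p j" using quot_pgrp[OF N Nc] by blast
  then interpret Q: pgrp "G Mod N" p j .
  interpret h: group_hom G "G Mod N" "\<lambda>a. N #> a"
    using N.r_coset_hom_Mod Q.is_group by (simp add: group_hom_def group_hom_axioms_def is_group)
  let ?A' = "carrier G - (N <#> ppow G p)"
  have img: "(\<lambda>a. N #> a) ` ?A' = carrier (G Mod N) - ppow (G Mod N) p"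
  proof
    show "(\<lambda>a. N #> a) ` ?A' \<subseteq> carrier (G Mod N) - ppow (G Mod N) p"
    proof
      fix Y assume "Y \<in> (\<lambda>a. N #> a) ` ?A'"
      then obtain a where a: "a \<in> ?A'" "Y = N #> a" by (rule imageE)
      have a1: "a \<in> carrier G" using a(1) by blast
      have "N #> a \<in> carrier (G Mod N)" unfolding carrier_FactGroup using a1 by (rule imageI)
      moreover have "N #> a \<notin> ppow (G Mod N) p" using S0[OF N, of a] a(1) by simp
      ultimately show "Y \<in> carrier (G Mod N) - ppow (G Mod N) p" using a by blast
    qed
    show "carrier (G Mod N) - ppow (G Mod N) p \<subseteq> (\<lambda>a. N #> a) ` ?A'"
    proof
      fix Y assume Y: "Y \<in> carrier (G Mod N) - ppow (G Mod N) p"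
      then obtain x where x: "x \<in> carrier G" "Y = N #> x" unfolding carrier_FactGroup by auto
      then have "x \<notin> N <#> ppow G p" using S0[OF N x(1)] Y by auto
      then show "Y \<in> (\<lambda>a. N #> a) ` ?A'" using x by auto
    qed
  qed
  have pb: "{(x, y). x \<in> ?A' \<and> y \<in> ?A' \<and> (N #> x, N #> y) \<in> crel (G Mod N) p} = relN G p N"
  proof -
    have eq: "(N #> x, N #> y) \<in> crel (G Mod N) p \<longleftrightarrow>
       (\<exists>g\<in>carrier G. \<exists>k::nat. \<exists>m\<in>N. y = m \<otimes> (g \<otimes> x \<otimes> inv g) [^] k)"
      if x: "x \<in> ?A'" and y: "y \<in> ?A'" for x y
    proof -
      have xQ: "N #> x \<in> carrier (G Mod N) - ppow (G Mod N) p" and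
           yQ: "N #> y \<in> carrier (G Mod N) - ppow (G Mod N) p" using img x y by auto
      have "(N #> x, N #> y) \<in> crel (G Mod N) p \<longleftrightarrow>
          (\<exists>g\<in>carrier G. \<exists>k::nat. N #> y = N #> ((g \<otimes> x \<otimes> inv g) [^] k))"
      proof -
        have c1: "(N #> x, N #> y) \<in> crel (G Mod N) p \<longleftrightarrow>
          (\<exists>gg\<in>carrier (G Mod N). \<exists>k::nat. N #> y = (gg \<otimes>\<^bsub>G Mod N\<^esub> (N #> x) \<otimes>\<^bsub>G Mod N\<^esub> inv\<^bsub>G Mod N\<^esub> gg) [^]\<^bsub>G Mod N\<^esub> k)"
          unfolding crel_def using xQ yQ by (simp only: mem_Collect_eq prod.case simp_thms)
        have e: "((N #> g) \<otimes>\<^bsub>G Mod N\<^esub> (N #> x) \<otimes>\<^bsub>G Mod N\<^esub> inv\<^bsub>G Mod N\<^esub> (N #> g)) [^]\<^bsub>G Mod N\<^esub> k = N #> ((g \<otimes> x \<otimes> inv g) [^] k)"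
          if "g \<in> carrier G" for g and k :: nat
        proof -
          have "(N #> g) \<otimes>\<^bsub>G Mod N\<^esub> (N #> x) \<otimes>\<^bsub>G Mod N\<^esub> inv\<^bsub>G Mod N\<^esub> (N #> g) = N #> (g \<otimes> x \<otimes> inv g)"
            using that x by (simp add: h.hom_mult h.hom_inv)
          then show ?thesis using that x by (simp add: h.hom_nat_pow)
        qed
        show ?thesis
        proof
          assume "(N #> x, N #> y) \<in> crel (G Mod N) p"
          then obtain gg k where gg: "gg \<in> carrier (G Mod N)"
            "N #> y = (gg \<otimes>\<^bsub>G Mod N\<^esub> (N #> x) \<otimes>\<^bsub>G Mod N\<^esub> inv\<^bsub>G Mod N\<^esub> gg) [^]\<^bsub>G Mod N\<^esub> (k::nat)"
            using c1 by blast
          then obtain g where g: "g \<in> carrier G" "gg = N #> g" unfolding carrier_FactGroup by blast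
          then have "N #> y = N #> ((g \<otimes> x \<otimes> inv g) [^] k)" using gg(2) e by simp
          then show "\<exists>g\<in>carrier G. \<exists>k::nat. N #> y = N #> ((g \<otimes> x \<otimes> inv g) [^] k)" using g by blast
        next
          assume "\<exists>g\<in>carrier G. \<exists>k::nat. N #> y = N #> ((g \<otimes> x \<otimes> inv g) [^] k)"
          then obtain g k where g: "g \<in> carrier G" "N #> y = N #> ((g \<otimes> x \<otimes> inv g) [^] (k::nat))" by blast
          have "N #> g \<in> carrier (G Mod N)" unfolding carrier_FactGroup using g by blast
          moreover have "N #> y = ((N #> g) \<otimes>\<^bsub>G Mod N\<^esub> (N #> x) \<otimes>\<^bsub>G Mod N\<^esub> inv\<^bsub>G Mod N\<^esub> (N #> g)) [^]\<^bsub>G Mod N\<^esub> k"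
            using e[OF g(1)] g(2) by simp
          ultimately show "(N #> x, N #> y) \<in> crel (G Mod N) p" using c1 by blast
        qed
      qed
      also have "\<dots> \<longleftrightarrow> (\<exists>g\<in>carrier G. \<exists>k::nat. \<exists>m\<in>N. y = m \<otimes> (g \<otimes> x \<otimes> inv g) [^] k)"
      proof -
        have "N #> y = N #> ((g \<otimes> x \<otimes> inv g) [^] k) \<longleftrightarrow> (\<exists>m\<in>N. y = m \<otimes> (g \<otimes> x \<otimes> inv g) [^] k)"
          if "g \<in> carrier G" for g and k :: nat
          using coset_eq[OF N, of y "(g \<otimes> x \<otimes> inv g) [^] k"] x y that by simp
        then show ?thesis by blast
      qed
      finally show ?thesis .
    qed
    show ?thesis
    proof (rule Set.set_eqI, rule iffI)
      fix z assume "z \<in> {(x, y). x \<in> ?A' \<and> y \<in> ?A' \<and> (N #> x, N #> y) \<in> crel (G Mod N) p}"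
      then obtain x y where xy: "z = (x, y)" "x \<in> ?A'" "y \<in> ?A'" "(N #> x, N #> y) \<in> crel (G Mod N) p"
        by blast
      then have "\<exists>g\<in>carrier G. \<exists>k::nat. \<exists>m\<in>N. y = m \<otimes> (g \<otimes> x \<otimes> inv g) [^] k"
        using eq by blast
      then show "z \<in> relN G p N" unfolding relN_def using xy by blast
    next
      fix z assume "z \<in> relN G p N"
      then obtain x y where xy: "z = (x, y)" "x \<in> ?A'" "y \<in> ?A'"
        "\<exists>g\<in>carrier G. \<exists>k::nat. \<exists>m\<in>N. y = m \<otimes> (g \<otimes> x \<otimes> inv g) [^] k"
        unfolding relN_def by blast
      then have "(N #> x, N #> y) \<in> crel (G Mod N) p" using eq by blast
      then show "z \<in> {(x, y). x \<in> ?A' \<and> y \<in> ?A' \<and> (N #> x, N #> y) \<in> crel (G Mod N) p}"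
        using xy by blast
    qed
  qed
  show "eta (G Mod N) = card (?A' // relN G p N)"
    using Q.GEN(1) pullback_card(1)[OF img Q.GEN(2)] pb by simp
  show "equiv ?A' (relN G p N)"
    using pullback_card(2)[OF img Q.GEN(2)] pb by simp
qed

end




definition good :: "('a, 'b) monoid_scheme \<Rightarrow> nat \<Rightarrow> 'a set" where
  "good G p = {m \<in> carrier G. (\<forall>q\<in>ppow G p. m \<otimes>\<^bsub>G\<^esub> q \<in> ppow G p) \<and>
     (\<forall>x\<in>carrier G - ppow G p. \<forall>y\<in>carrier G - ppow G p. \<forall>g\<in>carrier G. \<forall>k::nat.
        y = m \<otimes>\<^bsub>G\<^esub> (g \<otimes>\<^bsub>G\<^esub> x \<otimes>\<^bsub>G\<^esub> inv\<^bsub>G\<^esub> g) [^]\<^bsub>G\<^esub> k \<longrightarrow> (x, y) \<in> crel G p)}"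

context pgrp
begin

lemma crel_trans: "(x, y) \<in> crel G p \<Longrightarrow> (y, z) \<in> crel G p \<Longrightarrow> (x, z) \<in> crel G p"
  using GEN(2) unfolding equiv_def trans_def by blast

lemma crel_sym: "(x, y) \<in> crel G p \<Longrightarrow> (y, x) \<in> crel G p"
  using GEN(2) unfolding equiv_def sym_def by blast

lemma crel_dom: "(x, y) \<in> crel G p \<Longrightarrow> x \<in> carrier G - ppow G p \<and> y \<in> carrier G - ppow G p"
  unfolding crel_def by blast

lemma crel_intro:
  assumes "x \<in> carrier G - ppow G p" "y \<in> carrier G - ppow G p" "g \<in> carrier G"
    "y = (g \<otimes> x \<otimes> inv g) [^] (k::nat)"
  shows "(x, y) \<in> crel G p"
  using assms unfolding crel_def by blast

lemma crel_elim:
  assumes "(x, y) \<in> crel G p"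
  obtains g k where "g \<in> carrier G" "y = (g \<otimes> x \<otimes> inv g) [^] (k::nat)"
  using assms unfolding crel_def by blast

lemma mainlem1:
  assumes N: "N \<lhd> G" and Nc: "N \<noteq> carrier G" and eq: "eta (G Mod N) = eta G"
  shows "carrier G - (N <#> ppow G p) = carrier G - ppow G p \<and> relN G p N \<subseteq> crel G p"
proof -
  interpret N: normal N G by (rule N)
  interpret Q: group "G Mod N" by (rule N.factorgroup_is_group)
  interpret h: group_hom G "G Mod N" "\<lambda>a. N #> a"
    using N.r_coset_hom_Mod Q.is_group by (simp add: group_hom_def group_hom_axioms_def is_group)
  let ?A = "carrier G - ppow G p" and ?A' = "carrier G - (N <#> ppow G p)"
  have sat: "y \<in> ?A'" if x: "x \<in> ?A'" and xy: "(x, y) \<in> crel G p" for x y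
  proof -
    have yA: "y \<in> ?A" using crel_dom[OF xy] by blast
    show ?thesis
    proof (rule ccontr)
      assume "y \<notin> ?A'"
      then have yNP: "y \<in> N <#> ppow G p" using yA by blast
      obtain g k where g: "g \<in> carrier G" "x = (g \<otimes> y \<otimes> inv g) [^] (k::nat)"
        using crel_elim[OF crel_sym[OF xy]] by blast
      have yc: "y \<in> carrier G" using yA by blast
      have x2: "x = g \<otimes> y [^] k \<otimes> inv g" using g conj_pow yc by simp
      have "N #> y \<in> ppow (G Mod N) p" using S0[OF N yc] yNP by simp
      moreover have gQ: "N #> g \<in> carrier (G Mod N)" unfolding carrier_FactGroup using g(1) by (rule imageI)
      ultimately have "(N #> g) \<otimes>\<^bsub>G Mod N\<^esub> (N #> y) [^]\<^bsub>G Mod N\<^esub> k \<otimes>\<^bsub>G Mod N\<^esub> inv\<^bsub>G Mod N\<^esub> (N #> g)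
            \<in> ppow (G Mod N) p"
        by (rule Q.ppow_pow_conj)
      moreover have "(N #> g) \<otimes>\<^bsub>G Mod N\<^esub> (N #> y) [^]\<^bsub>G Mod N\<^esub> k \<otimes>\<^bsub>G Mod N\<^esub> inv\<^bsub>G Mod N\<^esub> (N #> g)
           = N #> x"
        using g(1) yc x2 by (simp add: h.hom_mult h.hom_inv h.hom_nat_pow)
      ultimately have "N #> x \<in> ppow (G Mod N) p" by simp
      moreover have xc: "x \<in> carrier G" using x by blast
      ultimately have "x \<in> N <#> ppow G p" using S0[OF N xc] by simp
      then show False using x by blast
    qed
  qed
  have RR': "(x, y) \<in> relN G p N" if x: "x \<in> ?A'" and xy: "(x, y) \<in> crel G p" for x y
  proof -
    have y: "y \<in> ?A'" using sat x xy by blast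
    obtain g k where g: "g \<in> carrier G" "y = (g \<otimes> x \<otimes> inv g) [^] (k::nat)"
      using crel_elim[OF xy] by blast
    have "y = \<one> \<otimes> (g \<otimes> x \<otimes> inv g) [^] k" using g x by simp
    moreover have "\<one> \<in> N" by simp
    ultimately have "\<exists>g'\<in>carrier G. \<exists>k'::nat. \<exists>m\<in>N. y = m \<otimes> (g' \<otimes> x \<otimes> inv g') [^] k'"
      using g(1) by blast
    then show ?thesis unfolding relN_def using x y by (simp only: mem_Collect_eq prod.case simp_thms)
  qed
  have sub: "?A' \<subseteq> ?A" using ppow_sub_NP[OF N] by blast
  have finA: "finite ?A" using fin by simp
  have cd: "card (?A' // relN G p N) = card (?A // crel G p)"
    using eq S2(1)[OF N Nc] GEN(1) by simp
  show ?thesis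
    by (rule quotient_compare[OF finA GEN(2) S2(2)[OF N Nc] sub sat RR' cd])
qed

lemma mainlem2:
  assumes N: "N \<lhd> G" and Nc: "N \<noteq> carrier G"
    and eqA: "carrier G - (N <#> ppow G p) = carrier G - ppow G p" and sub: "relN G p N \<subseteq> crel G p"
  shows "eta (G Mod N) = eta G"
proof -
  interpret N: normal N G by (rule N)
  have "crel G p \<subseteq> relN G p N"
  proof
    fix z assume z: "z \<in> crel G p"
    then obtain x y where xy: "z = (x, y)" by (cases z) auto
    then have dom: "x \<in> carrier G - ppow G p" "y \<in> carrier G - ppow G p" using crel_dom z by auto
    obtain g k where g: "g \<in> carrier G" "y = (g \<otimes> x \<otimes> inv g) [^] (k::nat)"
      using crel_elim z xy by blast
    have "y = \<one> \<otimes> (g \<otimes> x \<otimes> inv g) [^] k" using g dom by simp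
    moreover have "\<one> \<in> N" by simp
    ultimately have "\<exists>g'\<in>carrier G. \<exists>k'::nat. \<exists>m\<in>N. y = m \<otimes> (g' \<otimes> x \<otimes> inv g') [^] k'"
      using g(1) by blast
    then show "z \<in> relN G p N" unfolding relN_def eqA xy using dom
      by (simp only: mem_Collect_eq prod.case simp_thms)
  qed
  then have "relN G p N = crel G p" using sub by blast
  then show ?thesis using S2(1)[OF N Nc] GEN(1) eqA by simp
qed

lemma S4:
  assumes N: "N \<lhd> G"
  shows "N \<subseteq> good G p \<longleftrightarrow>
    (carrier G - (N <#> ppow G p) = carrier G - ppow G p \<and> relN G p N \<subseteq> crel G p)"
proof
  interpret N: normal N G by (rule N)
  assume Ng: "N \<subseteq> good G p"
  have "N <#> ppow G p \<subseteq> ppow G p"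
  proof
    fix z assume "z \<in> N <#> ppow G p"
    then obtain m q where "m \<in> N" "q \<in> ppow G p" "z = m \<otimes> q" unfolding set_mult_def by blast
    then show "z \<in> ppow G p" using Ng unfolding good_def by blast
  qed
  then have eqA: "carrier G - (N <#> ppow G p) = carrier G - ppow G p"
    using ppow_sub_NP[OF N] by blast
  moreover have "relN G p N \<subseteq> crel G p"
  proof
    fix z assume z: "z \<in> relN G p N"
    then obtain x y g k m where xy: "z = (x, y)" "x \<in> carrier G - ppow G p" "y \<in> carrier G - ppow G p"
      "g \<in> carrier G" "m \<in> N" "y = m \<otimes> (g \<otimes> x \<otimes> inv g) [^] (k::nat)"
      unfolding relN_def using eqA by blast
    then have "m \<in> good G p" using Ng by blast
    then show "z \<in> crel G p" using xy unfolding good_def by blast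
  qed
  ultimately show "carrier G - (N <#> ppow G p) = carrier G - ppow G p \<and> relN G p N \<subseteq> crel G p"
    by blast
next
  interpret N: normal N G by (rule N)
  assume H: "carrier G - (N <#> ppow G p) = carrier G - ppow G p \<and> relN G p N \<subseteq> crel G p"
  show "N \<subseteq> good G p"
  proof
    fix m assume m: "m \<in> N"
    have mc: "m \<in> carrier G" using m by simp
    have a: "m \<otimes> q \<in> ppow G p" if q: "q \<in> ppow G p" for q
    proof (rule ccontr)
      assume nq: "m \<otimes> q \<notin> ppow G p"
      have "m \<otimes> q \<in> carrier G" using mc q ppow_carrier by blast
      then have "m \<otimes> q \<in> carrier G - (N <#> ppow G p)" using nq H by blast
      moreover have "m \<otimes> q \<in> N <#> ppow G p" using m q unfolding set_mult_def by blast
      ultimately show False by blast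
    qed
    have b: "(x, y) \<in> crel G p"
      if "x \<in> carrier G - ppow G p" "y \<in> carrier G - ppow G p" "g \<in> carrier G"
         "y = m \<otimes> (g \<otimes> x \<otimes> inv g) [^] (k::nat)" for x y g k
    proof -
      have "(x, y) \<in> relN G p N" unfolding relN_def using that H m by blast
      then show ?thesis using H by blast
    qed
    show "m \<in> good G p" unfolding good_def using mc a b by blast
  qed
qed

lemma mainlem:
  assumes N: "N \<lhd> G" and Nc: "N \<noteq> carrier G"
  shows "eta (G Mod N) = eta G \<longleftrightarrow> N \<subseteq> good G p"
  using mainlem1[OF N Nc] mainlem2[OF N Nc] S4[OF N] by blast

lemma good_carrier: "good G p \<subseteq> carrier G"
  unfolding good_def by blast

lemma good_sub_P: "good G p \<subseteq> ppow G p"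
proof
  fix m assume "m \<in> good G p"
  then have "m \<otimes> \<one> \<in> ppow G p" "m \<in> carrier G" using one_ppow unfolding good_def by blast+
  then show "m \<in> ppow G p" by simp
qed

lemma good_ne: "good G p \<noteq> carrier G"
  using good_sub_P K3 ppow_carrier by blast

lemma good_one: "\<one> \<in> good G p"
proof -
  have "(x, y) \<in> crel G p"
    if "x \<in> carrier G - ppow G p" "y \<in> carrier G - ppow G p" "g \<in> carrier G"
       "y = \<one> \<otimes> (g \<otimes> x \<otimes> inv g) [^] (k::nat)" for x y g k
    using that by (intro crel_intro[of x y g k]) auto
  moreover have "\<one> \<otimes> q \<in> ppow G p" if "q \<in> ppow G p" for q
  proof -
    have "q \<in> carrier G" using that ppow_carrier by blast
    then show ?thesis using that by simp
  qed
  ultimately show ?thesis unfolding good_def by blast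
qed

lemma good_mult:
  assumes m1: "m1 \<in> good G p" and m2: "m2 \<in> good G p"
  shows "m1 \<otimes> m2 \<in> good G p"
proof -
  have c1: "m1 \<in> carrier G" and c2: "m2 \<in> carrier G" using m1 m2 good_carrier by blast+
  have a1: "\<And>q. q \<in> ppow G p \<Longrightarrow> m1 \<otimes> q \<in> ppow G p" using m1 unfolding good_def by blast
  have a2: "\<And>q. q \<in> ppow G p \<Longrightarrow> m2 \<otimes> q \<in> ppow G p" using m2 unfolding good_def by blast
  have b1: "\<And>x y g k. x \<in> carrier G - ppow G p \<Longrightarrow> y \<in> carrier G - ppow G p \<Longrightarrow> g \<in> carrier G \<Longrightarrow>
      y = m1 \<otimes> (g \<otimes> x \<otimes> inv g) [^] (k::nat) \<Longrightarrow> (x, y) \<in> crel G p"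
    using m1 unfolding good_def by blast
  have b2: "\<And>x y g k. x \<in> carrier G - ppow G p \<Longrightarrow> y \<in> carrier G - ppow G p \<Longrightarrow> g \<in> carrier G \<Longrightarrow>
      y = m2 \<otimes> (g \<otimes> x \<otimes> inv g) [^] (k::nat) \<Longrightarrow> (x, y) \<in> crel G p"
    using m2 unfolding good_def by blast
  have a: "m1 \<otimes> m2 \<otimes> q \<in> ppow G p" if q: "q \<in> ppow G p" for q
  proof -
    have "q \<in> carrier G" using q ppow_carrier by blast
    then have "m1 \<otimes> m2 \<otimes> q = m1 \<otimes> (m2 \<otimes> q)" using c1 c2 by (simp add: m_assoc)
    then show ?thesis using a1 a2 q by simp
  qed
  have b: "(x, y) \<in> crel G p"
    if x: "x \<in> carrier G - ppow G p" and y: "y \<in> carrier G - ppow G p" and g: "g \<in> carrier G"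
       and yeq: "y = m1 \<otimes> m2 \<otimes> (g \<otimes> x \<otimes> inv g) [^] (k::nat)" for x y g k
  proof -
    define w where "w = m2 \<otimes> (g \<otimes> x \<otimes> inv g) [^] k"
    have wc: "w \<in> carrier G" unfolding w_def using c2 x g by simp
    have yw: "y = m1 \<otimes> w" unfolding w_def yeq using c1 c2 x g by (simp add: m_assoc)
    have wA: "w \<in> carrier G - ppow G p"
    proof -
      have "w \<notin> ppow G p"
      proof
        assume "w \<in> ppow G p"
        then have "y \<in> ppow G p" using a1 yw by simp
        then show False using y by blast
      qed
      then show ?thesis using wc by blast
    qed
    have "(x, w) \<in> crel G p" using b2[OF x wA g] w_def by blast
    moreover have "(w, y) \<in> crel G p"
    proof -
      have "y = m1 \<otimes> (\<one> \<otimes> w \<otimes> inv \<one>) [^] (1::nat)" using yw wc by simp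
      then show ?thesis using b1[OF wA y one_closed] by blast
    qed
    ultimately show ?thesis by (rule crel_trans)
  qed
  show ?thesis unfolding good_def using a b c1 c2 by blast
qed

lemma good_pow: "m \<in> good G p \<Longrightarrow> m [^] (k::nat) \<in> good G p"
proof (induction k)
  case 0 then show ?case using good_one by simp
next
  case (Suc k)
  then have "m [^] k \<otimes> m \<in> good G p" using good_mult by blast
  then show ?case by (simp add: nat_pow_Suc)
qed

lemma good_inv:
  assumes m: "m \<in> good G p"
  shows "inv m \<in> good G p"
proof -
  have mc: "m \<in> carrier G" using m good_carrier by blast
  have o: "ord m \<ge> 1" using ord_ge_1[OF fin mc] .
  have "m [^] (ord m - 1) \<otimes> m = m [^] (Suc (ord m - 1))" by (simp only: nat_pow_Suc)
  also have "Suc (ord m - 1) = ord m" using o by simp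
  also have "m [^] ord m = \<one>" using mc by simp
  finally have "inv m = m [^] (ord m - 1)" using mc by (intro inv_equality) simp_all
  then show ?thesis using good_pow m by simp
qed

lemma good_conj:
  assumes m: "m \<in> good G p" and h: "h \<in> carrier G"
  shows "h \<otimes> m \<otimes> inv h \<in> good G p"
proof -
  have mc: "m \<in> carrier G" using m good_carrier by blast
  have a1: "\<And>q. q \<in> ppow G p \<Longrightarrow> m \<otimes> q \<in> ppow G p" using m unfolding good_def by blast
  have b1: "\<And>x y g k. x \<in> carrier G - ppow G p \<Longrightarrow> y \<in> carrier G - ppow G p \<Longrightarrow> g \<in> carrier G \<Longrightarrow>
      y = m \<otimes> (g \<otimes> x \<otimes> inv g) [^] (k::nat) \<Longrightarrow> (x, y) \<in> crel G p"
    using m unfolding good_def by blast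
  have a: "h \<otimes> m \<otimes> inv h \<otimes> q \<in> ppow G p" if q: "q \<in> ppow G p" for q
  proof -
    have qc: "q \<in> carrier G" using q ppow_carrier by blast
    have "inv h \<otimes> q \<otimes> inv (inv h) \<in> ppow G p" by (rule ppow_conj_imp[OF inv_closed[OF h] q])
    then have "m \<otimes> (inv h \<otimes> q \<otimes> inv (inv h)) \<in> ppow G p" using a1 by blast
    then have "h \<otimes> (m \<otimes> (inv h \<otimes> q \<otimes> inv (inv h))) \<otimes> inv h \<in> ppow G p"
      using ppow_conj_imp h by blast
    moreover have "h \<otimes> (m \<otimes> (inv h \<otimes> q \<otimes> inv (inv h))) \<otimes> inv h = h \<otimes> m \<otimes> inv h \<otimes> q"
      using h mc qc by (simp add: m_assoc)
    ultimately show ?thesis by simp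
  qed
  have b: "(x, y) \<in> crel G p"
    if x: "x \<in> carrier G - ppow G p" and y: "y \<in> carrier G - ppow G p" and g: "g \<in> carrier G"
       and yeq: "y = h \<otimes> m \<otimes> inv h \<otimes> (g \<otimes> x \<otimes> inv g) [^] (k::nat)" for x y g k
  proof -
    have xc: "x \<in> carrier G" and yc: "y \<in> carrier G" using x y by blast+
    define y' where "y' = inv h \<otimes> y \<otimes> inv (inv h)"
    have y'c: "y' \<in> carrier G" unfolding y'_def using h yc by simp
    have y'A: "y' \<in> carrier G - ppow G p"
      using ppow_conj[of "inv h" y] h yc y y'c unfolding y'_def by auto
    have "y' = m \<otimes> ((inv h \<otimes> g) \<otimes> x \<otimes> inv (inv h \<otimes> g)) [^] k"
    proof -
      have "y' = inv h \<otimes> (h \<otimes> m \<otimes> inv h \<otimes> (g \<otimes> x [^] k \<otimes> inv g)) \<otimes> h"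
        unfolding y'_def yeq using conj_pow g xc h by simp
      also have "\<dots> = m \<otimes> ((inv h \<otimes> g) \<otimes> x [^] k \<otimes> inv (inv h \<otimes> g))"
        using h g xc mc by (simp add: m_assoc inv_mult_group inv_cancel_l2)
      also have "(inv h \<otimes> g) \<otimes> x [^] k \<otimes> inv (inv h \<otimes> g) = ((inv h \<otimes> g) \<otimes> x \<otimes> inv (inv h \<otimes> g)) [^] k"
        using conj_pow h g xc by simp
      finally show ?thesis .
    qed
    then have "(x, y') \<in> crel G p" using b1[OF x y'A] h g by simp
    moreover have "(y', y) \<in> crel G p"
    proof -
      have "y = (h \<otimes> y' \<otimes> inv h) [^] (1::nat)" unfolding y'_def using h yc by (simp add: m_assoc inv_cancel_r2)
      then show ?thesis using crel_intro[OF y'A y h] by blast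
    qed
    ultimately show ?thesis by (rule crel_trans)
  qed
  show ?thesis unfolding good_def using a b h mc by blast
qed

lemma good_normal: "good G p \<lhd> G"
proof -
  have sg: "subgroup (good G p) G"
    using good_carrier good_one good_inv good_mult by (intro subgroupI) auto
  show ?thesis unfolding normal_inv_iff using sg good_conj by blast
qed

lemma good_iso:
  assumes f: "f \<in> iso G G"
  shows "f ` good G p = good G p"
proof -
  interpret f: group_hom G G f using f is_group by (simp add: group_hom_def group_hom_axioms_def iso_def)
  have bij: "bij_betw f (carrier G) (carrier G)" using f by (simp add: iso_def)
  have inj: "inj_on f (carrier G)" and surj: "f ` carrier G = carrier G"
    using bij by (auto simp: bij_betw_def)
  have fP: "f x \<in> ppow G p \<longleftrightarrow> x \<in> ppow G p" if x: "x \<in> carrier G" for x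
  proof
    assume "f x \<in> ppow G p"
    then obtain z where z: "z \<in> carrier G" "f x = z [^] p" unfolding ppow_def by auto
    then obtain y where y: "y \<in> carrier G" "z = f y" using surj by blast
    then have "f x = f (y [^] p)" using z by (simp add: f.hom_nat_pow)
    then have "x = y [^] p" using inj x y by (simp add: inj_on_def)
    then show "x \<in> ppow G p" using y unfolding ppow_def by auto
  next
    assume "x \<in> ppow G p"
    then obtain y where y: "y \<in> carrier G" "x = y [^] p" unfolding ppow_def by auto
    then have "f x = f y [^] p" by (simp add: f.hom_nat_pow)
    then show "f x \<in> ppow G p" using y unfolding ppow_def by auto
  qed
  have preA: "\<exists>x'\<in>carrier G - ppow G p. x = f x'" if x: "x \<in> carrier G - ppow G p" for x
  proof -
    obtain x' where "x' \<in> carrier G" "x = f x'" using surj x by blast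
    then show ?thesis using fP x by blast
  qed
  have fgood: "f m \<in> good G p" if m: "m \<in> good G p" for m
  proof -
    have mc: "m \<in> carrier G" using m good_carrier by blast
    have a1: "\<And>q. q \<in> ppow G p \<Longrightarrow> m \<otimes> q \<in> ppow G p" using m unfolding good_def by blast
    have b1: "\<And>x y g k. x \<in> carrier G - ppow G p \<Longrightarrow> y \<in> carrier G - ppow G p \<Longrightarrow> g \<in> carrier G \<Longrightarrow>
        y = m \<otimes> (g \<otimes> x \<otimes> inv g) [^] (k::nat) \<Longrightarrow> (x, y) \<in> crel G p"
      using m unfolding good_def by blast
    have a: "f m \<otimes> q \<in> ppow G p" if q: "q \<in> ppow G p" for q
    proof -
      obtain q' where q': "q' \<in> carrier G" "q = f q'" using surj q ppow_carrier by blast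
      then have "q' \<in> ppow G p" using fP q by blast
      then have "m \<otimes> q' \<in> ppow G p" using a1 by blast
      then have "f (m \<otimes> q') \<in> ppow G p" using fP[of "m \<otimes> q'"] mc q'(1) m_closed by blast
      moreover have "f (m \<otimes> q') = f m \<otimes> q" using mc q' by simp
      ultimately show ?thesis by simp
    qed
    have b: "(x, y) \<in> crel G p"
      if x: "x \<in> carrier G - ppow G p" and y: "y \<in> carrier G - ppow G p" and g: "g \<in> carrier G"
         and yeq: "y = f m \<otimes> (g \<otimes> x \<otimes> inv g) [^] (k::nat)" for x y g k
    proof -
      obtain x' where x': "x' \<in> carrier G - ppow G p" "x = f x'" using preA x by blast
      obtain y' where y': "y' \<in> carrier G - ppow G p" "y = f y'" using preA y by blast
      obtain g' where g': "g' \<in> carrier G" "g = f g'" using surj g by blast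
      have "f (m \<otimes> (g' \<otimes> x' \<otimes> inv g') [^] k) = y"
        using yeq x' g' mc by (simp add: f.hom_nat_pow)
      then have "y' = m \<otimes> (g' \<otimes> x' \<otimes> inv g') [^] k"
        using inj y' x' g' mc by (simp add: inj_on_def)
      then have "(x', y') \<in> crel G p" using b1 x' y' g' by blast
      then obtain hh j where hh: "hh \<in> carrier G" "y' = (hh \<otimes> x' \<otimes> inv hh) [^] (j::nat)"
        by (rule crel_elim)
      then have "y = (f hh \<otimes> x \<otimes> inv (f hh)) [^] j"
        using x' y' by (simp add: f.hom_nat_pow)
      then show ?thesis using crel_intro[OF x y] hh by simp
    qed
    have fmc: "f m \<in> carrier G" using mc by simp
    show ?thesis unfolding good_def mem_Collect_eq using a b fmc by blast
  qed
  have sub: "f ` good G p \<subseteq> good G p" using fgood by blast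
  have "card (f ` good G p) = card (good G p)"
    using inj good_carrier by (meson card_image inj_on_subset)
  moreover have "finite (good G p)" using fin good_carrier finite_subset by blast
  ultimately show ?thesis using sub by (simp add: card_subset_eq)
qed

lemma good_char: "characteristic G (good G p)"
  unfolding characteristic_def using good_normal good_iso normal_imp_subgroup by blast

end




theorem corollary4p2:
  fixes G :: "('a, 'b) monoid_scheme" and p :: nat
  assumes "group G" and "finite (carrier G)" and "Factorial_Ring.prime p"
    and "\<exists>n. order G = p ^ n"
    and "\<not> cyclic_group G"
  shows "(\<forall>N M. N \<lhd> G \<longrightarrow> M \<lhd> G \<longrightarrow> eta G = eta (G Mod N) \<longrightarrow> eta G = eta (G Mod M)
            \<longrightarrow> eta G = eta (G Mod (N <#>\<^bsub>G\<^esub> M)))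
       \<and> (\<exists>K. characteristic G K \<and> eta G = eta (G Mod K) \<and>
            (\<forall>N. N \<lhd> G \<longrightarrow> eta (G Mod N) = eta G \<longrightarrow> N \<subseteq> K))"
proof -
  obtain n where ordG: "order G = p ^ n" using assms(4) by blast
  interpret grp: group G by (rule assms(1))
  have nontriv: "carrier G \<noteq> {\<one>\<^bsub>G\<^esub>}"
  proof
    assume c: "carrier G = {\<one>\<^bsub>G\<^esub>}"
    have "carrier G = range (\<lambda>n::int. \<one>\<^bsub>G\<^esub> [^]\<^bsub>G\<^esub> n)" using c by auto
    then have "cyclic_group G" unfolding grp.cyclic_group by blast
    then show False using assms(5) by blast
  qed
  interpret P: pgrp G p n
    using assms(1,2,3) ordG nontriv unfolding pgrp_def pgrp_axioms_def by blast
  have part1: "\<forall>N M. N \<lhd> G \<longrightarrow> M \<lhd> G \<longrightarrow> eta G = eta (G Mod N) \<longrightarrow> eta G = eta (G Mod M)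
            \<longrightarrow> eta G = eta (G Mod (N <#>\<^bsub>G\<^esub> M))"
  proof (intro allI impI)
    fix N M assume N: "N \<lhd> G" and M: "M \<lhd> G" and eN: "eta G = eta (G Mod N)"
      and eM: "eta G = eta (G Mod M)"
    have Ns: "subgroup N G" and Ms: "subgroup M G" using N M normal_imp_subgroup by blast+
    show "eta G = eta (G Mod (N <#>\<^bsub>G\<^esub> M))"
    proof (cases "N = carrier G")
      case True
      have "N <#>\<^bsub>G\<^esub> M = carrier G" using True grp.set_mult_carrier_idem[OF Ms] by simp
      then show ?thesis using eN True by simp
    next
      case NF: False
      show ?thesis
      proof (cases "M = carrier G")
        case True
        have "N <#>\<^bsub>G\<^esub> M = M <#>\<^bsub>G\<^esub> N" using grp.commut_normal[OF Ns M] .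
        then have "N <#>\<^bsub>G\<^esub> M = carrier G" using True grp.set_mult_carrier_idem[OF Ns] by simp
        then show ?thesis using eM True by simp
      next
        case MF: False
        have Ng: "N \<subseteq> good G p" using P.mainlem[OF N NF] eN by simp
        have Mg: "M \<subseteq> good G p" using P.mainlem[OF M MF] eM by simp
        have NMg: "N <#>\<^bsub>G\<^esub> M \<subseteq> good G p"
        proof
          fix z assume "z \<in> N <#>\<^bsub>G\<^esub> M"
          then obtain a b where "a \<in> N" "b \<in> M" "z = a \<otimes>\<^bsub>G\<^esub> b" unfolding set_mult_def by blast
          then show "z \<in> good G p" using Ng Mg P.good_mult by blast
        qed
        have NMn: "N <#>\<^bsub>G\<^esub> M \<lhd> G" using grp.normal_subgroup_set_mult_closed[OF N M] .
        have NMc: "N <#>\<^bsub>G\<^esub> M \<noteq> carrier G" using NMg P.good_ne P.good_carrier by blast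
        show ?thesis using P.mainlem[OF NMn NMc] NMg by simp
      qed
    qed
  qed
  have part2: "\<exists>K. characteristic G K \<and> eta G = eta (G Mod K) \<and>
            (\<forall>N. N \<lhd> G \<longrightarrow> eta (G Mod N) = eta G \<longrightarrow> N \<subseteq> K)"
  proof (cases "eta (G Mod carrier G) = eta G")
    case True
    have "characteristic G (carrier G)"
      unfolding characteristic_def using grp.subgroup_self by (auto simp: iso_def bij_betw_def)
    moreover have "\<forall>N. N \<lhd> G \<longrightarrow> eta (G Mod N) = eta G \<longrightarrow> N \<subseteq> carrier G"
      using normal_imp_subgroup subgroup.subset by blast
    ultimately show ?thesis using True by metis
  next
    case False
    have ch: "characteristic G (good G p)" by (rule P.good_char)
    have eK: "eta G = eta (G Mod good G p)"
      using P.mainlem[OF P.good_normal P.good_ne] by simp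
    have "N \<subseteq> good G p" if N: "N \<lhd> G" and e: "eta (G Mod N) = eta G" for N
    proof -
      have "N \<noteq> carrier G" using False e by auto
      then show ?thesis using P.mainlem[OF N] e by simp
    qed
    then show ?thesis using ch eK by blast
  qed
  show ?thesis using part1 part2 by blast
qed



end
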